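(* Let $\varepsilon>0$, $k>0$ and $0<\lambda\le 1$. Then $$\min\Big\{E_\varepsilon[H]:\ H\in H^1(0,\lambda),\ H\ge 0 \text{ a.e.},\ \int_0^\lambda H\,dy=1\Big\}$$ and $$\min\Big\{U_\varepsilon[h]:\ h\in H^2(0,\lambda),\ h'\ge 0\text{ a.e.},\ h(0)=0,\ h(\lambda)=1\Big\}$$ are attained by the homogeneous inverse deformation $h(y)=y/\lambda$, i.e. by the constant inverse stretch $H\equiv 1/\lambda$. The corresponding minimum values are $E_\varepsilon[1/\lambda]=U_\varepsilon[y/\lambda]=\lambda W^*(1/\lambda)=W(\lambda)$.
   Context: Standing assumptions: $W:(0,\infty)\to[0,\infty)$ is continuously differentiable, convex on $(0,1)$, has a single isolated potential well at $F=1$ with $W(1)=0$ (so $W>0$ for $F\neq1$), has a single inflection point at some $F>1$, and has a horizontal asymptote as $F\to+\infty$ (example: $W(F)=(1-F^{-1})^2$). The inverse stored energy is $W^*(H):=H\,W(1/H)$ for $H>0$, extended by $W^*(0):=0$ (its limit as $H\searrow0$); thus $W^*\ge0$ on $[0,\infty)$ with $W^*(0)=W^*(1)=0$ and $W^*>0$ otherwise. For $\varepsilon>0$, $$E_\varepsilon[H]=\int_0^\lambda\Big(\tfrac{\varepsilon^2}{2}(H')^2+W^*(H)\Big)dy,$$ $$U_\varepsilon[h]=\int_0^\lambda\Big(\tfrac{\varepsilon^2}{2}(h'')^2+W^*(h')+\tfrac{k\,h'}{2}(y-\lambda h)^2\Big)dy,$$ where $k>0$ is a constant. *)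

theory Defs
  imports "HOL-Analysis.Analysis"
begin

definition Wstar :: "(real \<Rightarrow> real) \<Rightarrow> real \<Rightarrow> real" where
  "Wstar W H = (if H = 0 then 0 else H * W (1 / H))"

definition admissible_W :: "(real \<Rightarrow> real) \<Rightarrow> bool" where
  "admissible_W W \<longleftrightarrow>
     (\<forall>F>0. W F \<ge> 0) \<and>
     (\<exists>W'. continuous_on {0<..} W' \<and> (\<forall>F>0. (W has_real_derivative W' F) (at F))) \<and>
     convex_on {0<..<1} W \<and>
     W 1 = 0 \<and> (\<forall>F>0. F \<noteq> 1 \<longrightarrow> W F > 0) \<and>
     (\<exists>F0>1. convex_on {0<..F0} W \<and> concave_on {F0..} W) \<and>
     (\<exists>L. (W \<longlongrightarrow> L) at_top)"

text \<open>u belongs to H^1(0,lam) with weak derivative du: du is square integrable and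
  u is (the continuous representative) u(y) = u(0) + int_0^y du.\<close>
definition H1_with_deriv :: "real \<Rightarrow> (real \<Rightarrow> real) \<Rightarrow> (real \<Rightarrow> real) \<Rightarrow> bool" where
  "H1_with_deriv lam u du \<longleftrightarrow>
     set_integrable lborel {0..lam} du \<and>
     set_integrable lborel {0..lam} (\<lambda>y. (du y)\<^sup>2) \<and>
     (\<forall>y\<in>{0..lam}. u y = u 0 + (LBINT t:{0..y}. du t))"

definition E_energy :: "(real \<Rightarrow> real) \<Rightarrow> real \<Rightarrow> real \<Rightarrow> (real \<Rightarrow> real) \<Rightarrow> (real \<Rightarrow> real) \<Rightarrow> real" where
  "E_energy W eps lam H dH =
     (LBINT y:{0..lam}. eps\<^sup>2 / 2 * (dH y)\<^sup>2 + Wstar W (H y))"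

definition U_energy :: "(real \<Rightarrow> real) \<Rightarrow> real \<Rightarrow> real \<Rightarrow> real \<Rightarrow>
    (real \<Rightarrow> real) \<Rightarrow> (real \<Rightarrow> real) \<Rightarrow> (real \<Rightarrow> real) \<Rightarrow> real" where
  "U_energy W eps k lam h dh ddh =
     (LBINT y:{0..lam}. eps\<^sup>2 / 2 * (ddh y)\<^sup>2 + Wstar W (dh y)
                        + k * dh y / 2 * (y - lam * h y)\<^sup>2)"

end

theory Submission
  imports Defs
begin

lemma Wstar_eq: "Wstar W x = x * W (1 / x)"
  by (simp add: Wstar_def)

lemma H1_cont:
  assumes "H1_with_deriv lam u du"
  shows "continuous_on {0..lam} u"
proof -
  have si: "set_integrable lborel {0..lam} du" using assms unfolding H1_with_deriv_def by blast
  have io: "du integrable_on {0..lam}" using set_borel_integral_eq_integral(1)[OF si] .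
  have eq: "u y = u 0 + integral {0..y} du" if "y \<in> {0..lam}" for y
  proof -
    have "set_integrable lborel {0..y} du"
      using set_integrable_subset[OF si] that by auto
    then have "(LBINT t:{0..y}. du t) = integral {0..y} du"
      using set_borel_integral_eq_integral(2) by blast
    moreover have "u y = u 0 + (LBINT t:{0..y}. du t)" using assms that unfolding H1_with_deriv_def by blast
    ultimately show ?thesis by simp
  qed
  have "continuous_on {0..lam} (\<lambda>y. u 0 + integral {0..y} du)"
    by (intro continuous_intros indefinite_integral_continuous_1 io)
  then show ?thesis using continuous_on_eq eq by (metis (no_types, lifting))
qed

lemma cont_AE_nonneg:
  fixes f :: "real \<Rightarrow> real"
  assumes c: "continuous_on {0..lam} f" and lam: "lam > 0"
    and ae: "AE y in lborel. y \<in> {0..lam} \<longrightarrow> f y \<ge> 0"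
    and y0: "y0 \<in> {0..lam}"
  shows "f y0 \<ge> 0"
proof (rule ccontr)
  assume "\<not> f y0 \<ge> 0"
  then have neg: "f y0 < 0" by simp
  obtain d where d: "d > 0" and dd: "\<forall>x'\<in>{0..lam}. dist x' y0 < d \<longrightarrow> dist (f x') (f y0) < - f y0"
    using c y0 neg unfolding continuous_on_iff by (metis neg_0_less_iff_less)
  define a where "a = max 0 (y0 - d/2)"
  define b where "b = min lam (y0 + d/2)"
  have ab: "a < b" using y0 d lam by (auto simp: a_def b_def)
  have sub: "\<And>x. x \<in> {a..b} \<Longrightarrow> x \<in> {0..lam} \<and> f x < 0"
  proof -
    fix x assume x: "x \<in> {a..b}"
    then have x1: "x \<in> {0..lam}" using y0 by (auto simp: a_def b_def)
    have "dist x y0 < d" using x d by (auto simp: a_def b_def dist_real_def)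
    then have "dist (f x) (f y0) < - f y0" using dd x1 by blast
    then show "x \<in> {0..lam} \<and> f x < 0" using x1 by (auto simp: dist_real_def)
  qed
  have "AE x in lborel. x \<notin> {a..b}"
    using ae by (rule eventually_mono) (use sub in force)
  then have "emeasure lborel {a..b} = 0"
    by (subst (asm) AE_iff_measurable[of "{a..b}"]) auto
  then show False using ab by simp
qed

lemma Wstar_cont:
  assumes W: "admissible_W W"
  shows "continuous_on {0..} (Wstar W)"
proof -
  obtain W' where dW: "\<And>F. F > 0 \<Longrightarrow> (W has_real_derivative W' F) (at F)"
    using W unfolding admissible_W_def by blast
  obtain L where L: "(W \<longlongrightarrow> L) at_top" using W unfolding admissible_W_def by blast
  have "continuous (at x within {0..}) (\<lambda>x. x * W (1 / x))" if x: "x \<in> {0..}" for x :: real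
  proof (cases "x = 0")
    case True
    have l1: "((\<lambda>x. W (inverse x)) \<longlongrightarrow> L) (at_right 0)"
      using filterlim_compose[OF L filterlim_inverse_at_top_right] .
    have "((\<lambda>x::real. x * W (1 / x)) \<longlongrightarrow> 0 * L) (at_right 0)"
      using tendsto_mult[OF _ l1, of "\<lambda>x. x" 0]
      by (simp add: inverse_eq_divide tendsto_ident_at)
    then show ?thesis using True
      by (simp add: continuous_within at_within_Ici_at_right)
  next
    case False
    then have xp: "x > 0" using x by auto
    have "isCont W (1 / x)" using dW[of "1/x"] xp by (simp add: DERIV_isCont)
    then have "isCont (\<lambda>x. x * W (1 / x)) x"
      using xp by (intro continuous_intros) (auto intro: continuous_at_compose[of _ "\<lambda>x. 1/x", unfolded o_def])
    then show ?thesis by (simp add: continuous_at_imp_continuous_within)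
  qed
  then show ?thesis
    unfolding Wstar_eq[abs_def] by (simp add: continuous_on_eq_continuous_within)
qed

lemma Wstar_nonneg:
  assumes W: "admissible_W W" and x: "x \<ge> 0"
  shows "Wstar W x \<ge> 0"
  using W x unfolding admissible_W_def Wstar_def by auto

lemma tangent:
  assumes W: "admissible_W W" and lam: "0 < lam" "lam \<le> 1"
  shows "\<exists>s. \<forall>x\<ge>0. Wstar W x \<ge> Wstar W (1/lam) + s * (x - 1/lam)"
proof (cases "lam = 1")
  case True
  have "Wstar W 1 = 0" using W by (simp add: Wstar_def admissible_W_def)
  then show ?thesis using True Wstar_nonneg[OF W] by (intro exI[of _ 0]) auto
next
  case False
  then have b: "0 < lam" "lam < 1" using lam by auto
  obtain W' where dW: "\<And>F. F > 0 \<Longrightarrow> (W has_real_derivative W' F) (at F)"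
    using W unfolding admissible_W_def by blast
  have cvx: "convex_on {0<..<1} W" and W1: "W 1 = 0" and Wpos: "\<And>F. F > 0 \<Longrightarrow> F \<noteq> 1 \<Longrightarrow> W F > 0"
    using W unfolding admissible_W_def by auto
  have tan: "W u - W lam \<ge> W' lam * (u - lam)" if "u \<in> {0<..<1}" for u
    using convex_on_imp_above_tangent[OF cvx _ _ that, of lam "W' lam"] b dW[of lam]
    by (auto simp: has_field_derivative_at_within interior_open)
  have tan1: "W 1 - W lam \<ge> W' lam * (1 - lam)"
  proof -
    have "isCont W 1" using dW[of 1] by (simp add: DERIV_isCont)
    then have lim: "((\<lambda>u. W u - W lam - W' lam * (u - lam)) \<longlongrightarrow> W 1 - W lam - W' lam * (1 - lam)) (at_left 1)"
      by (intro tendsto_intros) (auto simp: isCont_def filterlim_at_split)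
    have ev: "eventually (\<lambda>u. W u - W lam - W' lam * (u - lam) \<ge> 0) (at_left (1::real))"
    proof -
      have "eventually (\<lambda>u. u \<in> {0<..<1}) (at_left (1::real))"
        by (rule eventually_at_left_real) simp
      then show ?thesis by eventually_elim (use tan in force)
    qed
    have "0 \<le> W 1 - W lam - W' lam * (1 - lam)"
      using tendsto_lowerbound[OF lim ev] by simp
    then show ?thesis by simp
  qed
  define s where "s = W lam - W' lam * lam"
  have Wl: "W lam > 0" using Wpos b by auto
  have Wd: "W' lam < 0"
  proof -
    have "W' lam * (1 - lam) < 0" using tan1 W1 Wl by linarith
    then show ?thesis using b by (simp add: mult_less_0_iff)
  qed
  have sp: "s \<ge> 0" unfolding s_def using Wl Wd b by (smt (verit) mult_neg_pos)
  have l1: "Wstar W (1/lam) + s * (1 - 1/lam) \<le> 0"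
  proof -
    have "Wstar W (1/lam) + s * (1 - 1/lam) = W lam + W' lam * (1 - lam)"
      using b by (simp add: Wstar_def s_def field_simps)
    then show ?thesis using tan1 W1 by simp
  qed
  show ?thesis
  proof (intro exI allI impI)
    fix x :: real assume x: "x \<ge> 0"
    consider "x < 1" | "x = 1" | "x > 1" by linarith
    then show "Wstar W x \<ge> Wstar W (1/lam) + s * (x - 1/lam)"
    proof cases
      case 1
      have "s * (x - 1/lam) \<le> s * (1 - 1/lam)" using 1 sp by (simp add: mult_left_mono)
      then show ?thesis using l1 Wstar_nonneg[OF W x] by linarith
    next
      case 2
      then show ?thesis using l1 W1 by (simp add: Wstar_def)
    next
      case 3
      have u: "1/x \<in> {0<..<1}" using 3 by auto
      have t: "W (1/x) \<ge> W lam + W' lam * (1/x - lam)" using tan[OF u] by simp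
      have "x * W (1/x) \<ge> x * (W lam + W' lam * (1/x - lam))"
        using mult_left_mono[OF t] 3 by simp
      moreover have "x * (W lam + W' lam * (1/x - lam)) = Wstar W (1/lam) + s * (x - 1/lam)"
        using b 3 by (simp add: Wstar_def s_def field_simps)
      ultimately show ?thesis using 3 by (simp add: Wstar_def)
    qed
  qed
qed


lemma sint_cont:
  fixes f :: "real \<Rightarrow> real"
  assumes "continuous_on {a..b} f"
  shows "set_integrable lborel {a..b} f"
  unfolding set_integrable_def using borel_integrable_compact[OF compact_Icc assms] .

lemma sint_add:
  fixes f g :: "real \<Rightarrow> real"
  assumes "set_integrable M A f" "set_integrable M A g"
  shows "set_integrable M A (\<lambda>x. f x + g x)"
  using assms unfolding set_integrable_def
  by (simp add: distrib_left Bochner_Integration.integrable_add)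

lemma LBINT_const:
  assumes "lam \<ge> 0"
  shows "(LBINT y:{0..lam}. (c::real)) = lam * c"
proof -
  have "set_integrable lborel {0..lam} (\<lambda>y. c)" by (rule sint_cont) simp
  then have "(LBINT y:{0..lam}. c) = integral {0..lam} (\<lambda>y. c)"
    using set_borel_integral_eq_integral(2) by blast
  then show ?thesis using assms by simp
qed

lemma main_bound:
  fixes g C H :: "real \<Rightarrow> real"
  assumes W: "admissible_W W" and lam: "0 < lam" "lam \<le> 1"
    and g: "set_integrable lborel {0..lam} (\<lambda>y. (g y)\<^sup>2)"
    and C: "continuous_on {0..lam} C"
    and Hc: "continuous_on {0..lam} H"
    and Hnn: "\<And>y. y \<in> {0..lam} \<Longrightarrow> H y \<ge> 0"
    and CH: "\<And>y. y \<in> {0..lam} \<Longrightarrow> C y \<ge> Wstar W (H y)"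
    and HI: "integral {0..lam} H = 1"
    and e: "e \<ge> 0"
  shows "lam * Wstar W (1/lam) \<le> (LBINT y:{0..lam}. e * (g y)\<^sup>2 + C y)"
proof -
  obtain s where s: "\<And>x. x \<ge> 0 \<Longrightarrow> Wstar W x \<ge> Wstar W (1/lam) + s * (x - 1/lam)"
    using tangent[OF W lam] by blast
  have si: "set_integrable lborel {0..lam} (\<lambda>y. e * (g y)\<^sup>2 + C y)"
    by (intro sint_add sint_cont C set_integrable_mult_right g)
  have eq: "(LBINT y:{0..lam}. e * (g y)\<^sup>2 + C y) = integral {0..lam} (\<lambda>y. e * (g y)\<^sup>2 + C y)"
    using set_borel_integral_eq_integral(2)[OF si] .
  have i1: "(\<lambda>y. e * (g y)\<^sup>2 + C y) integrable_on {0..lam}"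
    using set_borel_integral_eq_integral(1)[OF si] .
  have Hi: "(H has_integral 1) {0..lam}"
    using integrable_continuous_real[OF Hc] HI has_integral_integral by metis
  define c where "c = Wstar W (1/lam)"
  have h2: "((\<lambda>y. (c - s / lam) + s * H y) has_integral (lam * (c - s/lam) + s * 1)) {0..lam}"
    using has_integral_add[OF has_integral_const_real[of "c - s/lam" 0 lam] has_integral_mult_right[OF Hi, of s]]
      lam by simp
  have le: "integral {0..lam} (\<lambda>y. (c - s / lam) + s * H y) \<le> integral {0..lam} (\<lambda>y. e * (g y)\<^sup>2 + C y)"
  proof (rule integral_le)
    show "(\<lambda>y. c - s / lam + s * H y) integrable_on {0..lam}" using h2 by blast
    show "(\<lambda>y. e * (g y)\<^sup>2 + C y) integrable_on {0..lam}" by (rule i1)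
    fix y assume y: "y \<in> {0..lam}"
    have "c - s/lam + s * H y = c + s * (H y - 1/lam)" by (simp add: algebra_simps)
    also have "\<dots> \<le> Wstar W (H y)" using s[OF Hnn[OF y]] c_def by simp
    also have "\<dots> \<le> C y" by (rule CH[OF y])
    also have "\<dots> \<le> e * (g y)\<^sup>2 + C y" using e by simp
    finally show "c - s / lam + s * H y \<le> e * (g y)\<^sup>2 + C y" .
  qed
  have "integral {0..lam} (\<lambda>y. (c - s / lam) + s * H y) = lam * c"
    using integral_unique[OF h2] lam by (simp add: field_simps)
  then show ?thesis using le eq c_def by simp
qed

theorem proposition1:
  fixes W :: "real \<Rightarrow> real" and eps k lam :: real
  assumes W: "admissible_W W"
    and eps: "eps > 0" and k: "k > 0" and lam: "0 < lam" "lam \<le> 1"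
  shows
    "H1_with_deriv lam (\<lambda>y. 1 / lam) (\<lambda>y. 0)
     \<and> (\<forall>H dH. H1_with_deriv lam H dH
           \<and> (AE y in lborel. y \<in> {0..lam} \<longrightarrow> H y \<ge> 0)
           \<and> (LBINT y:{0..lam}. H y) = 1
         \<longrightarrow> E_energy W eps lam (\<lambda>y. 1 / lam) (\<lambda>y. 0) \<le> E_energy W eps lam H dH)
     \<and> H1_with_deriv lam (\<lambda>y. y / lam) (\<lambda>y. 1 / lam)
     \<and> H1_with_deriv lam (\<lambda>y. 1 / lam) (\<lambda>y. 0)
     \<and> (\<forall>h dh ddh. H1_with_deriv lam h dh \<and> H1_with_deriv lam dh ddh
           \<and> (AE y in lborel. y \<in> {0..lam} \<longrightarrow> dh y \<ge> 0)
           \<and> h 0 = 0 \<and> h lam = 1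
         \<longrightarrow> U_energy W eps k lam (\<lambda>y. y / lam) (\<lambda>y. 1 / lam) (\<lambda>y. 0)
               \<le> U_energy W eps k lam h dh ddh)
     \<and> E_energy W eps lam (\<lambda>y. 1 / lam) (\<lambda>y. 0) = lam * Wstar W (1 / lam)
     \<and> U_energy W eps k lam (\<lambda>y. y / lam) (\<lambda>y. 1 / lam) (\<lambda>y. 0) = lam * Wstar W (1 / lam)
     \<and> lam * Wstar W (1 / lam) = W lam"
  proof -
  have lam0: "lam \<noteq> 0" using lam by simp
  have Hc1: "H1_with_deriv lam (\<lambda>y. 1 / lam) (\<lambda>y. 0)"
    unfolding H1_with_deriv_def by (simp add: set_integrable_def)
  have Hc2: "H1_with_deriv lam (\<lambda>y. y / lam) (\<lambda>y. 1 / lam)"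
    unfolding H1_with_deriv_def
  proof (intro conjI ballI)
    show "set_integrable lborel {0..lam} (\<lambda>y. 1 / lam)" by (rule sint_cont) simp
    show "set_integrable lborel {0..lam} (\<lambda>y. (1 / lam)\<^sup>2)" by (rule sint_cont) simp
    fix y assume "y \<in> {0..lam}"
    then show "y / lam = 0 / lam + (LBINT t:{0..y}. 1 / lam)"
      using LBINT_const[of y "1/lam"] by (simp; metis)
  qed
  have Eval: "E_energy W eps lam (\<lambda>y. 1 / lam) (\<lambda>y. 0) = lam * Wstar W (1 / lam)"
    unfolding E_energy_def using LBINT_const[of lam "Wstar W (1/lam)"] lam by simp
  have Uval: "U_energy W eps k lam (\<lambda>y. y / lam) (\<lambda>y. 1 / lam) (\<lambda>y. 0) = lam * Wstar W (1 / lam)"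
    unfolding U_energy_def using LBINT_const[of lam "Wstar W (1/lam)"] lam lam0 by simp
  have last: "lam * Wstar W (1 / lam) = W lam"
    using lam0 by (simp add: Wstar_def)
  have Ebound: "E_energy W eps lam (\<lambda>y. 1 / lam) (\<lambda>y. 0) \<le> E_energy W eps lam H dH"
    if H1: "H1_with_deriv lam H dH" and ae: "AE y in lborel. y \<in> {0..lam} \<longrightarrow> H y \<ge> 0"
      and I: "(LBINT y:{0..lam}. H y) = 1" for H dH
  proof -
    have Hc: "continuous_on {0..lam} H" using H1_cont[OF H1] .
    have Hnn: "\<And>y. y \<in> {0..lam} \<Longrightarrow> H y \<ge> 0" using cont_AE_nonneg[OF Hc lam(1) ae] by blast
    have WHc: "continuous_on {0..lam} (\<lambda>y. Wstar W (H y))"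
      using continuous_on_compose2[OF Wstar_cont[OF W] Hc] Hnn by force
    have HI: "integral {0..lam} H = 1"
      using I set_borel_integral_eq_integral(2)[OF sint_cont[OF Hc]] by simp
    have g: "set_integrable lborel {0..lam} (\<lambda>y. (dH y)\<^sup>2)" using H1 unfolding H1_with_deriv_def by blast
    show ?thesis unfolding Eval unfolding E_energy_def
      by (rule main_bound[OF W lam g WHc Hc Hnn _ HI]) (use eps in auto)
  qed
  have Ubound: "U_energy W eps k lam (\<lambda>y. y / lam) (\<lambda>y. 1 / lam) (\<lambda>y. 0) \<le> U_energy W eps k lam h dh ddh"
    if h1: "H1_with_deriv lam h dh" and h2: "H1_with_deriv lam dh ddh"
      and ae: "AE y in lborel. y \<in> {0..lam} \<longrightarrow> dh y \<ge> 0" and h0: "h 0 = 0" and hl: "h lam = 1"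
    for h dh ddh
  proof -
    have hc: "continuous_on {0..lam} h" using H1_cont[OF h1] .
    have Hc: "continuous_on {0..lam} dh" using H1_cont[OF h2] .
    have Hnn: "\<And>y. y \<in> {0..lam} \<Longrightarrow> dh y \<ge> 0" using cont_AE_nonneg[OF Hc lam(1) ae] by blast
    have WHc: "continuous_on {0..lam} (\<lambda>y. Wstar W (dh y))"
      using continuous_on_compose2[OF Wstar_cont[OF W] Hc] Hnn by force
    have Cc: "continuous_on {0..lam} (\<lambda>y. Wstar W (dh y) + k * dh y / 2 * (y - lam * h y)\<^sup>2)"
    proof -
      have a: "continuous_on {0..lam} (\<lambda>y. k * dh y / 2)"
        by (rule continuous_on_divide[OF continuous_on_mult[OF continuous_on_const Hc] continuous_on_const]) simp
      have b: "continuous_on {0..lam} (\<lambda>y. (y - lam * h y)\<^sup>2)"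
        by (rule continuous_on_power[OF continuous_on_diff[OF continuous_on_id continuous_on_mult[OF continuous_on_const hc]]])
      show ?thesis by (rule continuous_on_add[OF WHc continuous_on_mult[OF a b]])
    qed
    have hb: "\<forall>y\<in>{0..lam}. h y = h 0 + (LBINT t:{0..y}. dh t)" using h1 unfolding H1_with_deriv_def by blast
    have "h lam = h 0 + (LBINT t:{0..lam}. dh t)" using bspec[OF hb, of lam] lam by simp
    then have "(LBINT t:{0..lam}. dh t) = 1" using h0 hl by simp
    then have HI: "integral {0..lam} dh = 1"
      using set_borel_integral_eq_integral(2)[OF sint_cont[OF Hc]] by simp
    have g: "set_integrable lborel {0..lam} (\<lambda>y. (ddh y)\<^sup>2)" using h2 unfolding H1_with_deriv_def by blast
    have CH: "Wstar W (dh y) \<le> Wstar W (dh y) + k * dh y / 2 * (y - lam * h y)\<^sup>2" if y: "y \<in> {0..lam}" for y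
      using Hnn[OF y] k by simp
    have "lam * Wstar W (1/lam) \<le> (LBINT y:{0..lam}. eps\<^sup>2 / 2 * (ddh y)\<^sup>2 + (Wstar W (dh y) + k * dh y / 2 * (y - lam * h y)\<^sup>2))"
      by (rule main_bound[OF W lam g Cc Hc Hnn CH HI]) (use eps in auto)
    then show ?thesis unfolding Uval unfolding U_energy_def by (simp add: add.assoc)
  qed
  show ?thesis
    apply (intro conjI allI impI)
            apply (rule Hc1)
           apply (elim conjE, rule Ebound; assumption)
          apply (rule Hc2)
         apply (rule Hc1)
        apply (elim conjE, rule Ubound; assumption)
       apply (rule Eval)
      apply (rule Uval)
     apply (rule last)
    done
qed

end
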